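(* Let $G$ be a finite simple graph on vertex set $\{x_1,\dots,x_n\}$ with $\operatorname{mat}(G)\geq 2$, let $\Bbbk$ be a field and $S=\Bbbk[x_1,\dots,x_n]$. Then $\operatorname{reg}(I(G)^{[2]})\geq \operatorname{aim}(G,2)+2$.
   Context: $I(G)\subseteq S$ is the edge ideal. $\operatorname{mat}(G)$ is the matching number. $I(G)^{[2]}$ is the ideal generated by the products $e_1e_2$ over all matchings $\{e_1,e_2\}$ of size $2$ (edge $\{x_i,x_j\}$ identified with $x_ix_j$). $\operatorname{reg}$ is Castelnuovo–Mumford regularity. Two edges form a gap if they are disjoint and no edge of $G$ joins a vertex of one to a vertex of the other. A sequence $(a_1,\dots,a_n)$ of integers is $k$-admissable if $a_i\ge1$ for all $i$ and $\sum a_i\le n+k-1$. For $1\le k\le\operatorname{mat}(G)$, a matching $M$ is $k$-admissable if there are nonempty pairwise disjoint $M_1,\dots,M_r\subseteq M$ with union $M$ such that edges from different $M_i$'s always form a gap in $G$, $(|M_1|,\dots,|M_r|)$ is $k$-admissable, and the induced subgraph of $G$ on $\bigcup_{e\in M_i}e$ is a forest for each $i$. $\operatorname{aim}(G,k)$ is the maximum size of a $k$-admissable matching ($0$ if none). *)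

theory Defs
  imports Main "HOL-Library.Extended_Real" "HOL-Library.Function_Algebras"
begin

text \<open>A finite simple graph on the vertex set {0..<n} (vertex i stands for x_(i+1))
  is given by its set E of edges, each edge a 2-element subset of {0..<n}.\<close>

definition simple_graph :: "nat \<Rightarrow> nat set set \<Rightarrow> bool" where
  "simple_graph n E \<longleftrightarrow> (\<forall>e\<in>E. card e = 2 \<and> e \<subseteq> {..<n})"

definition is_matching :: "nat set set \<Rightarrow> nat set set \<Rightarrow> bool" where
  "is_matching E M \<longleftrightarrow> M \<subseteq> E \<and> (\<forall>e1\<in>M. \<forall>e2\<in>M. e1 \<noteq> e2 \<longrightarrow> e1 \<inter> e2 = {})"

definition matching_number :: "nat set set \<Rightarrow> nat" where
  "matching_number E = Max {card M | M. is_matching E M}"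

definition is_gap :: "nat set set \<Rightarrow> nat set \<Rightarrow> nat set \<Rightarrow> bool" where
  "is_gap E e1 e2 \<longleftrightarrow> e1 \<inter> e2 = {} \<and>
     \<not> (\<exists>u\<in>e1. \<exists>v\<in>e2. {u, v} \<in> E)"

definition has_cycle :: "nat set set \<Rightarrow> bool" where
  "has_cycle F \<longleftrightarrow> (\<exists>vs. length vs \<ge> 3 \<and> distinct vs \<and>
      (\<forall>i < length vs. {vs ! i, vs ! ((i + 1) mod length vs)} \<in> F))"

definition is_forest :: "nat set set \<Rightarrow> bool" where
  "is_forest F \<longleftrightarrow> \<not> has_cycle F"

definition induced_edges :: "nat set set \<Rightarrow> nat set \<Rightarrow> nat set set" where
  "induced_edges E W = {e \<in> E. e \<subseteq> W}"

definition admissible_seq :: "nat \<Rightarrow> nat list \<Rightarrow> bool" where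
  "admissible_seq k as \<longleftrightarrow> (\<forall>a\<in>set as. a \<ge> 1) \<and> int (sum_list as) \<le> int (length as) + int k - 1"

definition admissible_matching :: "nat set set \<Rightarrow> nat \<Rightarrow> nat set set \<Rightarrow> bool" where
  "admissible_matching E k M \<longleftrightarrow> is_matching E M \<and>
     (\<exists>Ms :: nat set set list.
        (\<forall>B\<in>set Ms. B \<noteq> {}) \<and>
        (\<forall>i < length Ms. \<forall>j < length Ms. i \<noteq> j \<longrightarrow> Ms ! i \<inter> Ms ! j = {}) \<and>
        \<Union>(set Ms) = M \<and>
        (\<forall>i < length Ms. \<forall>j < length Ms. i \<noteq> j \<longrightarrow>
            (\<forall>e1\<in>Ms ! i. \<forall>e2\<in>Ms ! j. is_gap E e1 e2)) \<and>
        admissible_seq k (map card Ms) \<and>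
        (\<forall>B\<in>set Ms. is_forest (induced_edges E (\<Union>B))))"

definition aim :: "nat set set \<Rightarrow> nat \<Rightarrow> nat" where
  "aim E k = Max ({card M | M. admissible_matching E k M} \<union> {0})"

text \<open>Monomials of S = k[x_1..x_n] are represented by exponent vectors a :: nat => nat
  (supported in {0..<n}). A monomial ideal is given by a set of generating monomials;
  x^a lies in the ideal iff some generator divides it.\<close>
definition in_monideal :: "(nat \<Rightarrow> nat) set \<Rightarrow> (nat \<Rightarrow> nat) \<Rightarrow> bool" where
  "in_monideal Gens a \<longleftrightarrow> (\<exists>g\<in>Gens. \<forall>i. g i \<le> a i)"

definition sqfree_mon :: "nat set \<Rightarrow> (nat \<Rightarrow> nat)" where
  "sqfree_mon A = (\<lambda>i. if i \<in> A then 1 else 0)"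

text \<open>Generators of I(G)^[2]: products e1*e2 over matchings {e1,e2} of size 2.\<close>
definition sq_power2_gens :: "nat set set \<Rightarrow> (nat \<Rightarrow> nat) set" where
  "sq_power2_gens E = {sqfree_mon (e1 \<union> e2) | e1 e2. e1 \<in> E \<and> e2 \<in> E \<and> e1 \<noteq> e2 \<and> e1 \<inter> e2 = {}}"

text \<open>Koszul complex K(x_1..x_n; I) in multidegree a. Tor_i^S(I,k)_a is its i-th homology.
  Its degree-a, homological-degree-i component has k-basis the elements x^(a - F) e_F
  with F a subset of {0..<n}, |F| = i, F contained in the support of a and x^(a-F) in I.\<close>
definition kos_basis :: "nat \<Rightarrow> (nat \<Rightarrow> nat) set \<Rightarrow> nat \<Rightarrow> (nat \<Rightarrow> nat) \<Rightarrow> nat set set" where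
  "kos_basis n Gens i a = {F. F \<subseteq> {..<n} \<and> card F = i \<and> (\<forall>j\<in>F. 1 \<le> a j) \<and>
       in_monideal Gens (\<lambda>l. a l - sqfree_mon F l)}"

definition kos_chains :: "nat \<Rightarrow> (nat \<Rightarrow> nat) set \<Rightarrow> nat \<Rightarrow> (nat \<Rightarrow> nat) \<Rightarrow> (nat set \<Rightarrow> 'k::field) set" where
  "kos_chains n Gens i a = {f. \<forall>F. F \<notin> kos_basis n Gens i a \<longrightarrow> f F = 0}"

text \<open>Koszul differential: d(m e_F) = sum_{j in F} (-1)^{#\{l in F. l < j\}} x_j m e_(F-{j}).\<close>
definition kos_coeff :: "nat set \<Rightarrow> nat set \<Rightarrow> 'k::field" where
  "kos_coeff F G = (if \<exists>j\<in>F. G = F - {j}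
      then (- 1) ^ card {l \<in> F. l < (THE j. j \<in> F \<and> G = F - {j})} else 0)"

definition kos_diff :: "nat \<Rightarrow> (nat \<Rightarrow> nat) set \<Rightarrow> nat \<Rightarrow> (nat \<Rightarrow> nat) \<Rightarrow> (nat set \<Rightarrow> 'k::field) \<Rightarrow> (nat set \<Rightarrow> 'k)" where
  "kos_diff n Gens i a f = (\<lambda>G. if 0 < i \<and> G \<in> kos_basis n Gens (i - 1) a
      then (\<Sum>F\<in>kos_basis n Gens i a. kos_coeff F G * f F) else 0)"

abbreviation fun_scale :: "'k::field \<Rightarrow> (nat set \<Rightarrow> 'k) \<Rightarrow> (nat set \<Rightarrow> 'k)" where
  "fun_scale c f \<equiv> (\<lambda>x. c * f x)"

text \<open>Multigraded Betti number beta_(i,a)(I) = dim_k Tor_i^S(I,k)_a.\<close>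
definition betti :: "'k::field itself \<Rightarrow> nat \<Rightarrow> (nat \<Rightarrow> nat) set \<Rightarrow> nat \<Rightarrow> (nat \<Rightarrow> nat) \<Rightarrow> nat" where
  "betti TYPE('k) n Gens i a =
     vector_space.dim (fun_scale :: 'k \<Rightarrow> _)
        {f \<in> kos_chains n Gens i a. kos_diff n Gens i a f = 0}
   - vector_space.dim (fun_scale :: 'k \<Rightarrow> _)
        (kos_diff n Gens (i + 1) a ` kos_chains n Gens (i + 1) a)"

definition reg :: "'k::field itself \<Rightarrow> nat \<Rightarrow> (nat \<Rightarrow> nat) set \<Rightarrow> ereal" where
  "reg K n Gens = Sup {ereal (real (sum a {..<n}) - real i) | i a.
      (\<forall>l. l \<ge> n \<longrightarrow> a l = 0) \<and> betti K n Gens i a \<noteq> 0}"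

end

theory Submission
  imports Defs
begin

lemma sum_fun_apply: "(\<Sum>x\<in>A. (f x :: 'a \<Rightarrow> 'b::comm_monoid_add)) y = (\<Sum>x\<in>A. f x y)"
  by (induction A rule: infinite_finite_induct) auto

lemma kos_coeff_remove:
  assumes "j \<in> F"
  shows "kos_coeff F (F - {j}) = ((- 1) ^ card {l \<in> F. l < j} :: 'k::field)"
proof -
  have "(THE j'. j' \<in> F \<and> F - {j} = F - {j'}) = j"
    using assms by (intro the_equality) (simp, metis Diff_iff insertI1 singletonD)
  then show ?thesis using assms unfolding kos_coeff_def by auto
qed

lemma kos_coeff_nz:
  assumes "(kos_coeff F G :: 'k::field) \<noteq> 0"
  shows "\<exists>j\<in>F. G = F - {j}"
  using assms unfolding kos_coeff_def by (auto split: if_splits)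

lemma sign_cancel_aux:
  assumes "finite F" "j \<in> F" "k \<in> F" "j < k"
  shows "(kos_coeff F (F - {j}) * kos_coeff (F - {j}) (F - {j} - {k}) +
         kos_coeff F (F - {k}) * kos_coeff (F - {k}) (F - {k} - {j}) :: 'k::field) = 0"
proof -
  define A where "A = card {l \<in> F. l < j}"
  define B where "B = card {l \<in> F. l < k}"
  have e1: "{l \<in> F - {j}. l < k} = {l \<in> F. l < k} - {j}" by auto
  have "card {l \<in> F - {j}. l < k} = B - 1"
    unfolding e1 B_def using assms by (subst card_Diff_singleton) auto
  moreover have "B \<ge> 1"
  proof -
    have "j \<in> {l \<in> F. l < k}" using assms by auto
    then have "{l \<in> F. l < k} \<noteq> {}" by blast
    then show ?thesis unfolding B_def using assms by (simp add: Suc_leI card_gt_0_iff)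
  qed
  moreover have "{l \<in> F - {k}. l < j} = {l \<in> F. l < j}" using assms by auto
  ultimately have c: "kos_coeff F (F - {j}) * kos_coeff (F - {j}) (F - {j} - {k}) = ((- 1) ^ A * (- 1) ^ (B - 1) :: 'k)"
    "kos_coeff F (F - {k}) * kos_coeff (F - {k}) (F - {k} - {j}) = ((- 1) ^ B * (- 1) ^ A :: 'k)"
    using assms by (simp_all add: kos_coeff_remove A_def B_def)
  obtain B' where "B = Suc B'" using \<open>B \<ge> 1\<close> by (cases B) auto
  then show ?thesis unfolding c by simp
qed

lemma sign_cancel:
  assumes "finite F" "j \<in> F" "k \<in> F" "j \<noteq> k"
  shows "(kos_coeff F (F - {j}) * kos_coeff (F - {j}) (F - {j} - {k}) +
         kos_coeff F (F - {k}) * kos_coeff (F - {k}) (F - {k} - {j}) :: 'k::field) = 0"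
proof (cases "j < k")
  case True then show ?thesis using sign_cancel_aux[OF assms(1-3)] by simp
next
  case False then have "k < j" using assms by auto
  then show ?thesis using sign_cancel_aux[OF assms(1) assms(3) assms(2)] by (simp add: add.commute)
qed

lemma dd_sum:
  assumes K: "finite K" and F: "finite F" and FK: "\<And>j. j \<in> F \<Longrightarrow> F - {j} \<in> K"
  shows "(\<Sum>G\<in>K. kos_coeff G H * kos_coeff F G :: 'k::field) = 0"
proof (cases "\<exists>j k. j \<in> F \<and> k \<in> F \<and> j \<noteq> k \<and> H = F - {j} - {k}")
  case True
  then obtain j k where jk: "j \<in> F" "k \<in> F" "j \<noteq> k" "H = F - {j} - {k}" by blast
  have ne: "F - {j} \<noteq> F - {k}" using jk by auto
  have z: "kos_coeff G H * kos_coeff F G = (0::'k)" if "G \<in> K - {F - {j}, F - {k}}" for G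
  proof (rule ccontr)
    assume "kos_coeff G H * kos_coeff F G \<noteq> (0::'k)"
    then have "(kos_coeff G H :: 'k) \<noteq> 0" "(kos_coeff F G :: 'k) \<noteq> 0" by auto
    then obtain x y where "x \<in> F" "G = F - {x}" "y \<in> G" "H = G - {y}"
      using kos_coeff_nz by metis
    then have "x = j \<or> x = k" using jk by blast
    then show False using that \<open>G = F - {x}\<close> by auto
  qed
  have "(\<Sum>G\<in>K. kos_coeff G H * kos_coeff F G :: 'k) = (\<Sum>G\<in>{F - {j}, F - {k}}. kos_coeff G H * kos_coeff F G)"
    using z FK jk by (intro sum.mono_neutral_right[OF K]) auto
  also have "\<dots> = kos_coeff F (F - {j}) * kos_coeff (F - {j}) (F - {j} - {k}) +
         kos_coeff F (F - {k}) * kos_coeff (F - {k}) (F - {k} - {j})"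
    using ne jk by (simp add: Diff_insert2[symmetric] insert_commute mult.commute)
  also have "\<dots> = 0" by (rule sign_cancel[OF F jk(1-3)])
  finally show ?thesis .
next
  case False
  have "kos_coeff G H * kos_coeff F G = (0::'k)" for G
  proof (rule ccontr)
    assume "kos_coeff G H * kos_coeff F G \<noteq> (0::'k)"
    then have "(kos_coeff G H :: 'k) \<noteq> 0" "(kos_coeff F G :: 'k) \<noteq> 0" by auto
    then obtain x y where "x \<in> F" "G = F - {x}" "y \<in> G" "H = G - {y}"
      using kos_coeff_nz by metis
    then show False using False by auto
  qed
  then show ?thesis by (intro sum.neutral) auto
qed

lemma basis_mono:
  assumes "F \<in> kos_basis n Gens (Suc i) a" "j \<in> F"
  shows "F - {j} \<in> kos_basis n Gens i a"
proof -
  have fin: "finite F" using assms(1) unfolding kos_basis_def by (auto intro: finite_subset)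
  obtain g where g: "g \<in> Gens" "\<forall>l. g l \<le> a l - sqfree_mon F l"
    using assms(1) unfolding kos_basis_def in_monideal_def by auto
  have "\<forall>l. g l \<le> a l - sqfree_mon (F - {j}) l"
  proof
    fix l show "g l \<le> a l - sqfree_mon (F - {j}) l"
      using g(2)[rule_format, of l] unfolding sqfree_mon_def by (auto split: if_splits)
  qed
  then show ?thesis using assms g(1) fin unfolding kos_basis_def in_monideal_def
    by (auto simp: card_Diff_singleton)
qed

lemma finite_basis: "finite (kos_basis n Gens i a)"
  by (rule finite_subset[of _ "Pow {..<n}"]) (auto simp: kos_basis_def)

lemma finite_of_basis: "F \<in> kos_basis n Gens i a \<Longrightarrow> finite F"
  unfolding kos_basis_def by (auto intro: finite_subset)

lemma dd_zero:
  assumes "g \<in> kos_chains n Gens (Suc i) a"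
  shows "kos_diff n Gens i a (kos_diff n Gens (Suc i) a g :: nat set \<Rightarrow> 'k::field) = (\<lambda>_. 0)"
proof
  fix H
  let ?K = "kos_basis n Gens i a" and ?K1 = "kos_basis n Gens (Suc i) a"
  have "(\<Sum>G\<in>?K. kos_coeff G H * (\<Sum>F\<in>?K1. kos_coeff F G * g F) :: 'k)
      = (\<Sum>G\<in>?K. \<Sum>F\<in>?K1. g F * (kos_coeff G H * kos_coeff F G))"
    by (simp add: sum_distrib_left mult_ac)
  also have "\<dots> = (\<Sum>F\<in>?K1. \<Sum>G\<in>?K. g F * (kos_coeff G H * kos_coeff F G))"
    by (rule sum.swap)
  also have "\<dots> = (\<Sum>F\<in>?K1. g F * (\<Sum>G\<in>?K. kos_coeff G H * kos_coeff F G))"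
    by (simp add: sum_distrib_left)
  also have "\<dots> = 0"
    by (intro sum.neutral ballI) (simp add: dd_sum finite_basis finite_of_basis basis_mono)
  finally show "kos_diff n Gens i a (kos_diff n Gens (Suc i) a g) H = 0"
    unfolding kos_diff_def by (auto intro!: sum.neutral)
qed


lemma vs_fun: "vector_space (fun_scale :: 'k::field \<Rightarrow> (nat set \<Rightarrow> 'k) \<Rightarrow> _)"
  by unfold_locales (auto simp: algebra_simps fun_eq_iff)

lemma (in vector_space) dim_strict:
  assumes "S \<subseteq> T" "x \<in> T" "x \<notin> span S" "T \<subseteq> span C" "finite C"
  shows "dim S < dim T"
proof -
  obtain B where B: "B \<subseteq> S" "independent B" "S \<subseteq> span B" "card B = dim S"
    by (rule basis_exists)
  obtain B' where B': "B' \<subseteq> T" "independent B'" "T \<subseteq> span B'" "card B' = dim T"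
    by (rule basis_exists)
  have fB': "finite B'" using independent_span_bound[OF assms(5) B'(2)] B'(1) assms(4) by auto
  have "span B \<subseteq> span S" using B(1) by (rule span_mono)
  then have xB: "x \<notin> span B" using assms(3) by auto
  then have "x \<notin> B" using span_base by blast
  have ind: "independent (insert x B)" using independent_insertI[OF xB B(2)] .
  have "insert x B \<subseteq> span B'" using B(1) assms(1,2) B'(3) by auto
  from independent_span_bound[OF fB' ind this]
  have "finite (insert x B)" "card (insert x B) \<le> card B'" by auto
  then show ?thesis using B(4) B'(4) \<open>x \<notin> B\<close> by auto
qed

definition delta :: "nat set \<Rightarrow> nat set \<Rightarrow> 'k::field" where
  "delta F = (\<lambda>G. if G = F then 1 else 0)"

lemma chains_span:
  "kos_chains n Gens i a \<subseteq> module.span (fun_scale :: 'k::field \<Rightarrow> _) (delta ` kos_basis n Gens i a)"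
proof
  interpret fs: vector_space "fun_scale :: 'k \<Rightarrow> (nat set \<Rightarrow> 'k) \<Rightarrow> _" by (rule vs_fun)
  fix f :: "nat set \<Rightarrow> 'k" assume f: "f \<in> kos_chains n Gens i a"
  let ?K = "kos_basis n Gens i a"
  have "f = (\<Sum>F\<in>?K. fun_scale (f F) (delta F))"
  proof
    fix G
    show "f G = (\<Sum>F\<in>?K. fun_scale (f F) (delta F)) G"
      unfolding sum_fun_apply delta_def using f finite_basis[of n Gens i a]
      by (cases "G \<in> ?K") (auto simp: kos_chains_def if_distrib cong: if_cong)
  qed
  also have "\<dots> \<in> fs.span (delta ` ?K)"
    by (intro fs.span_sum fs.span_scale fs.span_base) auto
  finally show "f \<in> fs.span (delta ` ?K)" .
qed


definition invk :: "(nat \<Rightarrow> nat) \<Rightarrow> nat set \<Rightarrow> nat" where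
  "invk key G = (\<Sum>x\<in>G. \<Sum>y\<in>G. if x < y \<and> key y < key x then 1 else 0)"

lemma invk_insert:
  assumes "finite G" "x \<notin> G"
  shows "invk key (insert x G) = invk key G + (\<Sum>y\<in>G. if x < y \<and> key y < key x then 1 else 0)
           + (\<Sum>y\<in>G. if y < x \<and> key x < key y then 1 else 0)"
  using assms unfolding invk_def by (simp add: sum.distrib)

lemma neg_one_odd_sum:
  assumes "odd (A + B)"
  shows "((- 1) ^ A + (- 1) ^ B :: 'k::field) = 0"
  using assms by (cases "even A") auto

lemma card_less_sum: "finite G \<Longrightarrow> card {l \<in> G. l < x} = (\<Sum>y\<in>G. if y < x then 1 else 0)"
  by (simp add: sum.If_cases Int_def conj_commute)

lemma inv_cancel:
  assumes F: "finite F" and ab: "a \<in> F" "b \<in> F" "a < b" "key a = key b"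
    and oth: "\<And>y. y \<in> F - {a, b} \<Longrightarrow> key y \<noteq> key a"
  shows "((- 1) ^ invk key (F - {a}) * (- 1) ^ card {l \<in> F. l < a} +
          (- 1) ^ invk key (F - {b}) * (- 1) ^ card {l \<in> F. l < b} :: 'k::field) = 0"
proof -
  define R0 where "R0 = F - {a, b}"
  have fR: "finite R0" using F by (simp add: R0_def)
  have Fa: "F - {a} = insert b R0" and Fb: "F - {b} = insert a R0" using ab by (auto simp: R0_def)
  have nR: "a \<notin> R0" "b \<notin> R0" by (auto simp: R0_def)
  have ca: "{l \<in> F. l < a} = {l \<in> R0. l < a}" using ab by (auto simp: R0_def)
  have cb: "{l \<in> F. l < b} = insert a {l \<in> R0. l < b}" using ab by (auto simp: R0_def)
  define h where "h y = (if key y < key a then 1 else (if y < a then 1 else 0) + (if y < b then 1 else 0 :: nat))" for y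
  have pt: "(if b < y \<and> key y < key b then 1 else 0) + (if y < b \<and> key b < key y then 1 else 0)
      + (if a < y \<and> key y < key a then 1 else 0) + (if y < a \<and> key a < key y then 1 else 0)
      + (if y < a then 1 else 0) + (if y < b then 1 else (0::nat)) = 2 * h y" if "y \<in> R0" for y
  proof -
    have "key y \<noteq> key a" "y \<noteq> a" "y \<noteq> b" using oth that by (auto simp: R0_def)
    then show ?thesis using ab unfolding h_def by (cases "key y < key a") auto
  qed
  define E1 where "E1 = invk key (F - {a}) + card {l \<in> F. l < a}"
  define E2 where "E2 = invk key (F - {b}) + card {l \<in> F. l < b}"
  have "E1 + E2 = 2 * invk key R0 + 1 + (\<Sum>y\<in>R0. (if b < y \<and> key y < key b then 1 else 0) + (if y < b \<and> key b < key y then 1 else 0)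
      + (if a < y \<and> key y < key a then 1 else 0) + (if y < a \<and> key a < key y then 1 else 0)
      + (if y < a then 1 else 0) + (if y < b then 1 else (0::nat)))"
    unfolding E1_def E2_def Fa Fb ca cb using fR nR ab
    by (simp add: invk_insert card_less_sum sum.distrib)
  also have "\<dots> = 2 * invk key R0 + 1 + 2 * (\<Sum>y\<in>R0. h y)"
    using pt by (simp add: sum_distrib_left)
  finally have "odd (E1 + E2)" by simp
  from neg_one_odd_sum[OF this] show ?thesis unfolding E1_def E2_def by (simp add: power_add)
qed


definition good :: "nat set set \<Rightarrow> nat set \<Rightarrow> bool" where
  "good E U \<longleftrightarrow> (\<exists>e f. e \<in> E \<and> f \<in> E \<and> e \<noteq> f \<and> e \<inter> f = {} \<and> e \<union> f \<subseteq> U)"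

lemma sqfree_diff: "sqfree_mon W l - sqfree_mon F l = sqfree_mon (W - F) l"
  by (simp add: sqfree_mon_def)

lemma basis_iff:
  assumes "W \<subseteq> {..<n}"
  shows "F \<in> kos_basis n (sq_power2_gens E) j (sqfree_mon W) \<longleftrightarrow> F \<subseteq> W \<and> card F = j \<and> good E (W - F)"
proof -
  have 1: "(\<forall>x\<in>F. 1 \<le> sqfree_mon W x) \<longleftrightarrow> F \<subseteq> W" by (auto simp: sqfree_mon_def)
  have 2: "in_monideal (sq_power2_gens E) (\<lambda>l. sqfree_mon W l - sqfree_mon F l) \<longleftrightarrow> good E (W - F)"
  proof
    assume "in_monideal (sq_power2_gens E) (\<lambda>l. sqfree_mon W l - sqfree_mon F l)"
    then obtain e f where h: "\<forall>i. sqfree_mon (e \<union> f) i \<le> sqfree_mon (W - F) i" "e \<in> E" "f \<in> E" "e \<noteq> f" "e \<inter> f = {}"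
      unfolding sqfree_diff in_monideal_def sq_power2_gens_def by blast
    have "e \<union> f \<subseteq> W - F"
    proof
      fix x assume "x \<in> e \<union> f" then show "x \<in> W - F" using h(1)[rule_format, of x]
        by (auto simp: sqfree_mon_def split: if_splits)
    qed
    then show "good E (W - F)" using h unfolding good_def by blast
  next
    assume "good E (W - F)"
    then obtain e f where h: "e \<in> E" "f \<in> E" "e \<noteq> f" "e \<inter> f = {}" "e \<union> f \<subseteq> W - F"
      unfolding good_def by blast
    have "sqfree_mon (e \<union> f) \<in> sq_power2_gens E" using h unfolding sq_power2_gens_def by blast
    moreover have "\<forall>i. sqfree_mon (e \<union> f) i \<le> sqfree_mon (W - F) i" using h(5) by (auto simp: sqfree_mon_def)
    ultimately show "in_monideal (sq_power2_gens E) (\<lambda>l. sqfree_mon W l - sqfree_mon F l)"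
      unfolding sqfree_diff in_monideal_def by blast
  qed
  show ?thesis unfolding kos_basis_def using 1 2 assms by auto
qed

locale mset =
  fixes n :: nat and E :: "nat set set" and M :: "nat set set" and e1 e2 :: "nat set"
  assumes sg: "simple_graph n E" and mat: "is_matching E M"
    and e1: "e1 \<in> M" and e2: "e2 \<in> M" and e12: "e1 \<noteq> e2"
    and gap: "\<And>r f. r \<in> M - {e1, e2} \<Longrightarrow> f \<in> M \<Longrightarrow> f \<noteq> r \<Longrightarrow> is_gap E r f"
begin

definition "R = M - {e1, e2}"
definition "W = \<Union>M"
definition "P = e1 \<union> e2"
definition "m = card M"
definition "ii = m - 2"
definition "key x = Min (THE r. r \<in> R \<and> x \<in> r)"
definition "transv G \<longleftrightarrow> G \<subseteq> \<Union>R \<and> (\<forall>r\<in>R. card (G \<inter> r) = 1)"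
definition "T0 = Min ` R"
definition "p = (SOME p. p \<in> e1)"
definition "\<sigma> = insert p T0"

lemma ME: "M \<subseteq> E" using mat by (simp add: is_matching_def)
lemma disj: "f \<in> M \<Longrightarrow> g \<in> M \<Longrightarrow> f \<noteq> g \<Longrightarrow> f \<inter> g = {}" using mat by (simp add: is_matching_def)
lemma card_e: "e \<in> E \<Longrightarrow> card e = 2" using sg by (simp add: simple_graph_def)
lemma e_sub: "e \<in> E \<Longrightarrow> e \<subseteq> {..<n}" using sg by (simp add: simple_graph_def)
lemma fin_e: "e \<in> E \<Longrightarrow> finite e" using card_e by (metis card.infinite zero_neq_numeral)
lemma finM: "finite M" using ME e_sub by (intro finite_subset[of M "Pow {..<n}"]) auto
lemma W_sub: "W \<subseteq> {..<n}" using ME e_sub by (auto simp: W_def)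
lemma finW: "finite W" using W_sub finite_subset by blast
lemma m2: "m \<ge> 2"
proof -
  have "card {e1, e2} \<le> card M" using e1 e2 finM by (intro card_mono) auto
  then show ?thesis using e12 by (simp add: m_def)
qed
lemma cardR: "card R = m - 2"
  unfolding R_def m_def using e1 e2 e12 finM by (simp add: card_Diff_subset)
lemma finR: "finite R" using finM by (simp add: R_def)
lemma RM: "R \<subseteq> M" by (auto simp: R_def)
lemma cardW: "card W = 2 * m"
proof -
  have "card W = (\<Sum>e\<in>M. card e)" unfolding W_def
    using finM ME fin_e disj by (intro card_Union_disjoint) (auto simp: pairwise_def disjnt_def)
  also have "\<dots> = (\<Sum>e\<in>M. 2)" using ME card_e by (intro sum.cong) auto
  finally show ?thesis by (simp add: m_def)
qed
lemma P_R: "P \<inter> \<Union>R = {}"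
  using disj e1 e2 by (auto simp: P_def R_def)
lemma W_PR: "W = P \<union> \<Union>R"
  using e1 e2 by (auto simp: W_def P_def R_def)
lemma Min_in: "r \<in> M \<Longrightarrow> Min r \<in> r"
  using ME card_e fin_e by (metis Min_in card.empty zero_neq_numeral subsetD)
lemma key_eq: assumes "r \<in> R" "x \<in> r" shows "key x = Min r"
proof -
  have "(THE r. r \<in> R \<and> x \<in> r) = r"
  proof (rule the_equality)
    show "r \<in> R \<and> x \<in> r" using assms by simp
  next
    fix r' assume "r' \<in> R \<and> x \<in> r'"
    then show "r' = r" using assms disj[of r r'] RM by auto
  qed
  then show ?thesis by (simp add: key_def)
qed
lemma Min_inj: assumes "r \<in> R" "r' \<in> R" "Min r = Min r'" shows "r = r'"
proof (rule ccontr)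
  assume "r \<noteq> r'"
  then have "r \<inter> r' = {}" using disj assms RM by auto
  moreover have "Min r \<in> r" using Min_in assms(1) RM by blast
  moreover have "Min r' \<in> r'" using Min_in assms(2) RM by blast
  ultimately show False using assms(3) by (metis disjoint_iff)
qed
lemma edge2: assumes "r \<in> E" "t \<in> r" "u \<in> r" "v \<in> r" "t \<noteq> u" "u \<noteq> v" "t \<noteq> v" shows False
proof -
  have "{t, u, v} \<subseteq> r" using assms by auto
  then have "card {t, u, v} \<le> card r" using fin_e assms(1) by (intro card_mono) auto
  then show False using card_e[OF assms(1)] assms by simp
qed
lemma p_in: "p \<in> e1"
proof -
  have "e1 \<noteq> {}" using card_e ME e1 by fastforce
  then show ?thesis unfolding p_def by (meson ex_in_conv someI_ex)
qed
lemma p_notR: "p \<notin> \<Union>R" using p_in P_R by (auto simp: P_def)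
lemma T0_sub: "T0 \<subseteq> \<Union>R" using Min_in RM by (auto simp: T0_def)
lemma cardT0: "card T0 = m - 2"
  unfolding T0_def using cardR Min_inj by (subst card_image) (auto simp: inj_on_def)
lemma finT0: "finite T0" using finR by (simp add: T0_def)
lemma sigma_p: "\<sigma> - {p} = T0" using p_notR T0_sub by (auto simp: \<sigma>_def)
lemma card_sigma: "card \<sigma> = Suc ii"
proof -
  have "p \<notin> T0" using p_notR T0_sub by auto
  then show ?thesis using finT0 cardT0 m2 by (simp add: \<sigma>_def ii_def)
qed
lemma dummy1: "True"
  using p_notR T0_sub finT0 cardT0 m2 by (auto simp: \<sigma>_def ii_def)
lemma fin_sigma: "finite \<sigma>" using finT0 by (simp add: \<sigma>_def)
lemma T0_r: assumes r: "r \<in> R" shows "T0 \<inter> r = {Min r}"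
proof
  show "{Min r} \<subseteq> T0 \<inter> r" using r Min_in RM by (auto simp: T0_def)
  show "T0 \<inter> r \<subseteq> {Min r}"
  proof
    fix y assume "y \<in> T0 \<inter> r"
    then obtain r' where "r' \<in> R" "y = Min r'" "y \<in> r" by (auto simp: T0_def)
    moreover have "Min r' \<in> r'" using Min_in \<open>r' \<in> R\<close> RM by auto
    ultimately have "r' = r" using disj[of r r'] r RM by auto
    then show "y \<in> {Min r}" using \<open>y = Min r'\<close> by simp
  qed
qed
lemma transv_T0: "transv T0"
  unfolding transv_def using T0_sub T0_r by simp

abbreviation "a \<equiv> sqfree_mon W"
abbreviation "Gs \<equiv> sq_power2_gens E"
abbreviation "K j \<equiv> kos_basis n Gs j a"

lemma bas: "F \<in> K j \<longleftrightarrow> F \<subseteq> W \<and> card F = j \<and> good E (W - F)"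
  by (rule basis_iff[OF W_sub])

lemma sigma_facets: assumes "x \<in> \<sigma>" shows "\<sigma> - {x} \<in> K ii"
proof -
  have c: "card (\<sigma> - {x}) = ii" using assms card_sigma fin_sigma by simp
  have s: "\<sigma> - {x} \<subseteq> W" using p_in T0_sub e1 RM by (auto simp: \<sigma>_def W_def)
  have g: "good E (W - (\<sigma> - {x}))"
  proof (cases "x = p")
    case True
    then have "\<sigma> - {x} = T0" using sigma_p by simp
    moreover have "e1 \<union> e2 \<subseteq> W - T0" using T0_sub P_R e1 e2 by (auto simp: W_def P_def)
    moreover have "e1 \<in> E" "e2 \<in> E" "e1 \<inter> e2 = {}" using e1 e2 ME disj[OF e1 e2 e12] by auto
    ultimately show ?thesis unfolding good_def using e12 by blast
  next
    case False
    then obtain r where r: "r \<in> R" "x = Min r" using assms by (auto simp: \<sigma>_def T0_def)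
    have "r \<union> e2 \<subseteq> W - (\<sigma> - {x})"
    proof
      fix y assume y: "y \<in> r \<union> e2"
      have "y \<in> W" using y r RM e2 by (auto simp: W_def)
      moreover have "y \<notin> \<sigma> - {x}"
      proof
        assume "y \<in> \<sigma> - {x}"
        then have "y = p \<or> y \<in> T0 - {Min r}" using r by (auto simp: \<sigma>_def)
        then show False
        proof
          assume "y = p" then show False using y p_in p_notR r disj e1 e2 e12 by blast
        next
          assume yT: "y \<in> T0 - {Min r}"
          then have "y \<in> \<Union>R" using T0_sub by auto
          then have "y \<notin> e2" using P_R by (auto simp: P_def)
          then show False using y yT T0_r[OF r(1)] by auto
        qed
      qed
      ultimately show "y \<in> W - (\<sigma> - {x})" by simp
    qed
    moreover have "r \<noteq> e2" "r \<inter> e2 = {}" using r disj e2 RM by (auto simp: R_def)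
    moreover have "r \<in> E" "e2 \<in> E" using r RM ME e2 by auto
    ultimately show ?thesis unfolding good_def by blast
  qed
  show ?thesis using bas c s g by simp
qed

end


context mset begin

definition phi :: "nat set \<Rightarrow> 'k::field" where
  "phi G = (if transv G then (- 1) ^ invk key G else 0)"

lemma transv_one: assumes "transv G" "r \<in> R" obtains t where "G \<inter> r = {t}"
  using assms unfolding transv_def by (metis card_1_singletonE)

lemma edge_in_P:
  assumes e: "e \<in> E" "e \<subseteq> W - F" and tr: "transv (F - {w})" and w: "w \<in> F"
  shows "e \<subseteq> P - {w}"
proof
  fix u assume u: "u \<in> e"
  obtain v where v: "v \<in> e" "u \<noteq> v" "e = {u, v}" using card_e[OF e(1)] u
    by (metis card_2_iff insert_commute insert_iff singletonD)
  show "u \<in> P - {w}"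
  proof (rule ccontr)
    assume "u \<notin> P - {w}"
    moreover have "u \<in> W" "u \<noteq> w" using u e w by auto
    ultimately have "u \<in> \<Union>R" using W_PR by auto
    then obtain r where r: "r \<in> R" "u \<in> r" by auto
    obtain t where t: "(F - {w}) \<inter> r = {t}" using transv_one[OF tr r(1)] by blast
    have tF: "t \<in> F" "t \<in> r" using t by auto
    have uF: "u \<notin> F" using u e by auto
    have "v \<in> W" "v \<notin> F" using v e by auto
    then obtain f where f: "f \<in> M" "v \<in> f" by (auto simp: W_def)
    show False
    proof (cases "f = r")
      case True
      have "r \<in> E" using r RM ME by auto
      then show False using edge2[of r t u v] tF r(2) f(2) True uF \<open>v \<notin> F\<close> v(2) by auto
    next
      case False
      have "is_gap E r f" using gap[of r f] r(1) f(1) False by (auto simp: R_def)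
      then show False using r(2) f(2) v(3) e(1) unfolding is_gap_def by blast
    qed
  qed
qed

lemma sum2: "x \<noteq> y \<Longrightarrow> sum f {x, y} = f x + f y" by simp

lemma cardP: "card P = 4"
proof -
  have "card P = card e1 + card e2" unfolding P_def
    using disj[OF e1 e2 e12] fin_e ME e1 e2 by (intro card_Un_disjoint) auto
  moreover have "card e1 = 2" "card e2 = 2" using card_e ME e1 e2 by auto
  ultimately show ?thesis by simp
qed

lemma finP: "finite P" using fin_e ME e1 e2 by (auto simp: P_def)

lemma cocycle:
  assumes F: "F \<in> K (Suc ii)"
  shows "(\<Sum>G\<in>K ii. phi G * kos_coeff F G) = (0::'k::field)"
proof (cases "\<forall>G\<in>K ii. phi G * kos_coeff F G = (0::'k)")
  case True then show ?thesis by (intro sum.neutral) auto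
next
  case False
  then obtain G0 where G0: "G0 \<in> K ii" "phi G0 \<noteq> (0::'k)" "kos_coeff F G0 \<noteq> (0::'k)" by auto
  then obtain w where w: "w \<in> F" "G0 = F - {w}" using kos_coeff_nz by metis
  have trG0: "transv G0" using G0(2) by (auto simp: phi_def split: if_splits)
  have FW: "F \<subseteq> W" "good E (W - F)" using F bas by auto
  have finF: "finite F" using FW finW finite_subset by blast
  show ?thesis
  proof (cases "w \<in> \<Union>R")
    case False
    then have wP: "w \<in> P" using FW w W_PR by auto
    obtain e f where ef: "e \<in> E" "f \<in> E" "e \<noteq> f" "e \<inter> f = {}" "e \<union> f \<subseteq> W - F"
      using FW(2) unfolding good_def by blast
    have "e \<subseteq> P - {w}" "f \<subseteq> P - {w}" using edge_in_P ef trG0 w by auto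
    then have "card (e \<union> f) \<le> card (P - {w})" using finP by (intro card_mono) auto
    moreover have "card (e \<union> f) = 4" using ef card_e fin_e by (simp add: card_Un_disjoint)
    moreover have "card (P - {w}) = 3" using cardP wP finP by simp
    ultimately show ?thesis by simp
  next
    case True
    then obtain r where r: "r \<in> R" "w \<in> r" by auto
    obtain t where t: "G0 \<inter> r = {t}" using transv_one[OF trG0 r(1)] by blast
    have tw: "t \<noteq> w" "t \<in> F" "t \<in> r" using t w by auto
    have FR: "F \<subseteq> \<Union>R" using trG0 w r unfolding transv_def by auto
    have Fr: "F \<inter> r = {t, w}" using t w r by auto
    have oth: "x \<in> F - {t, w} \<Longrightarrow> \<exists>r'\<in>R. r' \<noteq> r \<and> x \<in> r' \<and> F \<inter> r' = {x}" for x
    proof -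
      assume x: "x \<in> F - {t, w}"
      then obtain r' where r': "r' \<in> R" "x \<in> r'" using FR by auto
      have "r' \<noteq> r" using Fr x r' by auto
      then have dj: "r \<inter> r' = {}" using disj r(1) r'(1) RM by auto
      obtain y where y: "G0 \<inter> r' = {y}" using transv_one[OF trG0 r'(1)] by blast
      have "F \<inter> r' = G0 \<inter> r'" using w r dj by auto
      then have "F \<inter> r' = {x}" using y x r' by auto
      then show ?thesis using r' \<open>r' \<noteq> r\<close> by auto
    qed
    have trt: "transv (F - {t})"
      unfolding transv_def
    proof (intro conjI ballI)
      show "F - {t} \<subseteq> \<Union>R" using FR by auto
    next
      fix r' assume r': "r' \<in> R"
      show "card ((F - {t}) \<inter> r') = 1"
      proof (cases "r' = r")
        case True then have "(F - {t}) \<inter> r' = {w}" using Fr tw by auto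
        then show ?thesis by simp
      next
        case False
        then have dj: "r \<inter> r' = {}" using disj r(1) r' RM by auto
        have "t \<notin> r'" "w \<notin> r'" using dj tw(3) r(2) by auto
        then have "(F - {t}) \<inter> r' = G0 \<inter> r'" using w(2) by blast
        then show ?thesis using trG0 r' unfolding transv_def by auto
      qed
    qed
    have z: "phi G * kos_coeff F G = (0::'k)" if "G \<in> K ii - {F - {w}, F - {t}}" for G
    proof (rule ccontr)
      assume "phi G * kos_coeff F G \<noteq> (0::'k)"
      then have "phi G \<noteq> (0::'k)" "kos_coeff F G \<noteq> (0::'k)" by auto
      then obtain x where x: "x \<in> F" "G = F - {x}" "transv G"
        using kos_coeff_nz by (metis phi_def)
      have "x \<noteq> t" "x \<noteq> w" using x that by auto
      then obtain r' where r': "r' \<in> R" "F \<inter> r' = {x}" using oth x by blast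
      have "card (G \<inter> r') = 1" using x(3) r' unfolding transv_def by auto
      moreover have "G \<inter> r' = {}" using r' x by auto
      ultimately show False by simp
    qed
    have Kw: "F - {w} \<in> K ii" "F - {t} \<in> K ii" using basis_mono[OF F] w tw by auto
    have ne: "F - {w} \<noteq> F - {t}" using tw w by auto
    have "(\<Sum>G\<in>K ii. phi G * kos_coeff F G) = (\<Sum>G\<in>{F - {w}, F - {t}}. phi G * kos_coeff F G :: 'k)"
    proof (rule sum.mono_neutral_right[OF finite_basis])
      show "{F - {w}, F - {t}} \<subseteq> K ii" using Kw by blast
      show "\<forall>G\<in>K ii - {F - {w}, F - {t}}. phi G * kos_coeff F G = (0::'k)" using z by blast
    qed
    also have "\<dots> = phi (F - {w}) * kos_coeff F (F - {w}) + phi (F - {t}) * kos_coeff F (F - {t})"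
      by (rule sum2[OF ne])
    also have "\<dots> = (- 1) ^ invk key (F - {w}) * (- 1) ^ card {l \<in> F. l < w} +
          (- 1) ^ invk key (F - {t}) * (- 1) ^ card {l \<in> F. l < t}"
      using trG0 trt w tw by (simp add: phi_def kos_coeff_remove)
    also have "\<dots> = 0"
    proof -
      have keq: "key t = key w" using key_eq r tw by auto
      have ko: "key y \<noteq> key t" if yF: "y \<in> F - {t, w}" for y
      proof -
        obtain r' where r': "r' \<in> R" "r' \<noteq> r" "y \<in> r'" using oth[OF yF] by blast
        have "key y = Min r'" "key t = Min r" using key_eq r' r tw by auto
        then show ?thesis using Min_inj r' r by auto
      qed
      show ?thesis
      proof (cases "t < w")
        case True
        have "((- 1) ^ invk key (F - {t}) * (- 1) ^ card {l \<in> F. l < t} +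
          (- 1) ^ invk key (F - {w}) * (- 1) ^ card {l \<in> F. l < w} :: 'k) = 0"
          by (rule inv_cancel[OF finF tw(2) w(1) True keq ko])
        then show ?thesis by (simp only: add.commute)
      next
        case False
        then have "w < t" using tw by auto
        have ko': "key y \<noteq> key w" if "y \<in> F - {w, t}" for y using ko[of y] that keq by auto
        show ?thesis
          by (rule inv_cancel[OF finF w(1) tw(2) \<open>w < t\<close> keq[symmetric] ko'])
      qed
    qed
    finally show ?thesis .
  qed
qed

end


context mset begin

definition zz :: "nat set \<Rightarrow> 'k::field" where
  "zz F = (if F \<in> K ii then kos_coeff \<sigma> F else 0)"

lemma betti_nz: "betti TYPE('k::field) n Gs ii a \<noteq> 0"
proof -
  interpret fs: vector_space "fun_scale :: 'k \<Rightarrow> (nat set \<Rightarrow> 'k) \<Rightarrow> _" by (rule vs_fun)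
  define ker :: "(nat set \<Rightarrow> 'k) set" where "ker = {f \<in> kos_chains n Gs ii a. kos_diff n Gs ii a f = 0}"
  define im :: "(nat set \<Rightarrow> 'k) set" where "im = kos_diff n Gs (ii + 1) a ` kos_chains n Gs (ii + 1) a"
  define psi :: "(nat set \<Rightarrow> 'k) \<Rightarrow> 'k" where "psi f = (\<Sum>G\<in>K ii. phi G * f G)" for f
  have zker: "zz \<in> ker"
  proof -
    have "(zz :: nat set \<Rightarrow> 'k) \<in> kos_chains n Gs ii a" by (auto simp: kos_chains_def zz_def)
    moreover have "kos_diff n Gs ii a zz = (0 :: nat set \<Rightarrow> 'k)"
    proof
      fix H
      have "(\<Sum>G\<in>K ii. kos_coeff G H * (zz G :: 'k)) = (\<Sum>G\<in>K ii. kos_coeff G H * kos_coeff \<sigma> G :: 'k)"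
        by (rule sum.cong) (auto simp: zz_def)
      also have "\<dots> = 0" by (rule dd_sum[OF finite_basis fin_sigma sigma_facets])
      finally show "kos_diff n Gs ii a (zz :: nat set \<Rightarrow> 'k) H = 0 H" unfolding kos_diff_def by simp
    qed
    ultimately show ?thesis by (simp add: ker_def)
  qed
  have imker: "im \<subseteq> ker"
  proof
    fix f assume "f \<in> im"
    then obtain g where g: "g \<in> kos_chains n Gs (Suc ii) a" "f = kos_diff n Gs (Suc ii) a g"
      by (auto simp: im_def)
    have "f \<in> kos_chains n Gs ii a" using g(2) by (auto simp: kos_chains_def kos_diff_def)
    moreover have "kos_diff n Gs ii a f = 0" using dd_zero[OF g(1)] g(2) by (simp add: zero_fun_def)
    ultimately show "f \<in> ker" by (simp add: ker_def)
  qed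
  have psi_im: "im \<subseteq> {f. psi f = 0}"
  proof
    fix f assume "f \<in> im"
    then obtain g where g: "g \<in> kos_chains n Gs (Suc ii) a" "f = kos_diff n Gs (Suc ii) a g"
      by (auto simp: im_def)
    let ?K1 = "K (Suc ii)"
    have "psi f = (\<Sum>G\<in>K ii. phi G * (\<Sum>F\<in>?K1. kos_coeff F G * g F))"
      unfolding psi_def g(2) kos_diff_def by (intro sum.cong) auto
    also have "\<dots> = (\<Sum>G\<in>K ii. \<Sum>F\<in>?K1. g F * (phi G * kos_coeff F G))"
      by (simp add: sum_distrib_left mult_ac)
    also have "\<dots> = (\<Sum>F\<in>?K1. \<Sum>G\<in>K ii. g F * (phi G * kos_coeff F G))"
      by (rule sum.swap)
    also have "\<dots> = (\<Sum>F\<in>?K1. g F * (\<Sum>G\<in>K ii. phi G * kos_coeff F G))"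
      by (simp add: sum_distrib_left)
    also have "\<dots> = 0"
      by (intro sum.neutral ballI) (simp add: cocycle)
    finally show "f \<in> {f. psi f = 0}" by simp
  qed
  have padd: "psi (f + g) = psi f + psi g" for f g
    unfolding psi_def by (simp add: distrib_left sum.distrib)
  have pscale: "psi (\<lambda>x. c * f x) = c * psi f" for c f
    unfolding psi_def by (simp add: sum_distrib_left mult_ac)
  have p0: "psi 0 = 0" unfolding psi_def by simp
  have sub: "fs.subspace {f. psi f = 0}"
    unfolding fs.subspace_def using padd pscale p0 by auto
  have span_im: "fs.span im \<subseteq> {f. psi f = 0}"
    by (rule fs.span_minimal[OF psi_im sub])
  have psiz: "psi zz \<noteq> 0"
  proof -
    have pT: "p \<in> \<sigma>" by (simp add: \<sigma>_def)
    have T0K: "T0 \<in> K ii" using sigma_facets[OF pT] sigma_p by simp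
    have rest: "phi G * zz G = (0::'k)" if "G \<in> K ii - {T0}" for G
    proof (rule ccontr)
      assume "phi G * zz G \<noteq> (0::'k)"
      then have "phi G \<noteq> (0::'k)" "kos_coeff \<sigma> G \<noteq> (0::'k)" using that by (auto simp: zz_def)
      then obtain x where x: "x \<in> \<sigma>" "G = \<sigma> - {x}" "transv G"
        using kos_coeff_nz by (metis phi_def)
      show False
      proof (cases "x = p")
        case True then show False using x that sigma_p by auto
      next
        case False
        then have "p \<in> G" using x by (auto simp: \<sigma>_def)
        then show False using x(3) p_notR unfolding transv_def by auto
      qed
    qed
    have "psi zz = phi T0 * zz T0 + (\<Sum>G\<in>K ii - {T0}. phi G * zz G)"
      unfolding psi_def by (rule sum.remove[OF finite_basis T0K])
    also have "\<dots> = phi T0 * zz T0" using rest by (simp add: sum.neutral)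
    also have "\<dots> = (- 1) ^ invk key T0 * (- 1) ^ card {l \<in> \<sigma>. l < p}"
      using transv_T0 T0K sigma_p kos_coeff_remove[OF pT] by (simp add: phi_def zz_def)
    finally show ?thesis by simp
  qed
  have "zz \<notin> fs.span im" using span_im psiz by auto
  moreover have "ker \<subseteq> fs.span (delta ` K ii)" using chains_span[of n Gs ii a] by (auto simp: ker_def)
  ultimately have "fs.dim im < fs.dim ker"
    by (intro fs.dim_strict[OF imker zker]) (auto simp: finite_basis)
  then show ?thesis unfolding betti_def ker_def im_def by simp
qed

lemma main: "ereal (real m + 2) \<le> reg TYPE('k::field) n Gs"
proof -
  have supp: "\<forall>l. l \<ge> n \<longrightarrow> a l = 0" using W_sub by (auto simp: sqfree_mon_def)
  have sa: "sum a {..<n} = 2 * m"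
  proof -
    have "sum a {..<n} = card ({..<n} \<inter> W)" by (simp add: sqfree_mon_def sum.If_cases)
    also have "{..<n} \<inter> W = W" using W_sub by auto
    finally show ?thesis using cardW by simp
  qed
  have "ereal (real (sum a {..<n}) - real ii) \<in> {ereal (real (sum a {..<n}) - real i) | i a.
      (\<forall>l. l \<ge> n \<longrightarrow> a l = 0) \<and> betti TYPE('k) n Gs i a \<noteq> 0}"
    using supp betti_nz by blast
  then have "ereal (real (sum a {..<n}) - real ii) \<le> reg TYPE('k) n Gs"
    unfolding reg_def by (rule Sup_upper)
  moreover have "real (sum a {..<n}) - real ii = real m + 2" using sa m2 by (simp add: ii_def)
  ultimately show ?thesis by simp
qed

end


lemma finite_E: "simple_graph n E \<Longrightarrow> finite E"
  unfolding simple_graph_def by (rule finite_subset[of _ "Pow {..<n}"]) auto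

lemma two_elems: assumes "finite A" "2 \<le> card A" obtains x y where "x \<in> A" "y \<in> A" "x \<noteq> y"
proof -
  have "\<not> card A \<le> Suc 0" using assms by simp
  then have "\<not> (\<forall>a\<in>A. \<forall>b\<in>A. a = b)" using card_le_Suc0_iff_eq[OF assms(1)] by blast
  then show ?thesis using that by blast
qed

lemma extract_pair:
  assumes sg: "simple_graph n E" and adm: "admissible_matching E 2 M" and c3: "card M \<ge> 3"
  shows "\<exists>e1 e2. mset n E M e1 e2"
proof -
  have mat: "is_matching E M" using adm by (simp add: admissible_matching_def)
  have finM: "finite M" using mat finite_E[OF sg] by (auto simp: is_matching_def intro: finite_subset)
  obtain Ms :: "nat set set list" where
    ne: "\<forall>B\<in>set Ms. B \<noteq> {}" and
    un: "\<Union>(set Ms) = M" and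
    gp: "\<forall>i < length Ms. \<forall>j < length Ms. i \<noteq> j \<longrightarrow> (\<forall>e1\<in>Ms ! i. \<forall>e2\<in>Ms ! j. is_gap E e1 e2)" and
    as: "admissible_seq 2 (map card Ms)"
    using adm unfolding admissible_matching_def by blast
  define L where "L = length Ms"
  define c where "c k = card (Ms ! k)" for k
  have finP: "k < L \<Longrightarrow> finite (Ms ! k)" for k using un finM L_def
    by (metis Sup_upper finite_subset nth_mem)
  have c1: "k < L \<Longrightarrow> c k \<ge> 1" for k using ne finP unfolding c_def L_def
    by (metis One_nat_def Suc_leI card_gt_0_iff nth_mem)
  have "sum_list (map card Ms) \<le> L + 1" using as unfolding admissible_seq_def L_def by simp
  moreover have "sum_list (map card Ms) = (\<Sum>k<L. c k)"
    unfolding sum_list_sum_nth L_def c_def by (simp add: atLeast0LessThan)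
  moreover have "(\<Sum>k<L. c k) = (\<Sum>k<L. (c k - 1)) + L"
  proof -
    have "(\<Sum>k<L. c k) = (\<Sum>k<L. (c k - 1) + 1)"
    proof (intro sum.cong refl)
      fix x assume "x \<in> {..<L}"
      then have "c x \<ge> 1" using c1 by auto
      then show "c x = c x - 1 + 1" by simp
    qed
    also have "\<dots> = (\<Sum>k<L. (c k - 1)) + (\<Sum>k<L. 1)" by (rule sum.distrib)
    finally show ?thesis by simp
  qed
  ultimately have sd: "(\<Sum>k<L. (c k - 1)) \<le> 1" by simp
  have cl2: "k < L \<Longrightarrow> c k \<le> 2" for k
  proof -
    assume k: "k < L"
    have "c k - 1 \<le> (\<Sum>k<L. (c k - 1))" using k by (intro member_le_sum) auto
    then show ?thesis using sd by simp
  qed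
  have uniq: "k < L \<Longrightarrow> j < L \<Longrightarrow> k \<noteq> j \<Longrightarrow> c k \<ge> 2 \<Longrightarrow> c j \<le> 1" for k j
  proof -
    assume kj: "k < L" "j < L" "k \<noteq> j" "c k \<ge> 2"
    have "(\<Sum>x\<in>{k, j}. (c x - 1)) \<le> (\<Sum>k<L. (c k - 1))" using kj by (intro sum_mono2) auto
    then show ?thesis using kj sd by simp
  qed
  have gapI: "is_gap E r f" if r: "r \<in> M" "f \<in> M" "f \<noteq> r"
      and sm: "\<And>i. i < L \<Longrightarrow> r \<in> Ms ! i \<Longrightarrow> c i \<le> 1" for r f
  proof -
    obtain i where i: "i < L" "r \<in> Ms ! i" using r(1) un unfolding L_def by (metis UnionE in_set_conv_nth)
    obtain j where j: "j < L" "f \<in> Ms ! j" using r(2) un unfolding L_def by (metis UnionE in_set_conv_nth)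
    have "i \<noteq> j"
    proof
      assume "i = j"
      then have "{r, f} \<subseteq> Ms ! i" using i j by auto
      then have "card {r, f} \<le> c i" unfolding c_def using finP[OF i(1)] by (rule card_mono[rotated])
      then show False using sm[OF i] r(3) by simp
    qed
    then show ?thesis using gp i j unfolding L_def by blast
  qed
  show ?thesis
  proof (cases "\<exists>k<L. c k \<ge> 2")
    case True
    then obtain k where k: "k < L" "c k \<ge> 2" by blast
    then have "c k = 2" using cl2 by force
    then obtain e1 e2 where e: "e1 \<noteq> e2" "Ms ! k = {e1, e2}" unfolding c_def by (meson card_2_iff)
    have inM: "e1 \<in> M" "e2 \<in> M" using e k un unfolding L_def by (metis UnionI insertCI nth_mem)+
    have "mset n E M e1 e2"
    proof
      fix r f assume rf: "r \<in> M - {e1, e2}" "f \<in> M" "f \<noteq> r"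
      show "is_gap E r f"
      proof (rule gapI)
        fix i assume i: "i < L" "r \<in> Ms ! i"
        then have "i \<noteq> k" using rf e by auto
        then show "c i \<le> 1" using uniq[OF k(1) i(1) _ k(2)] by auto
      qed (use rf in auto)
    qed (use sg mat inM e in auto)
    then show ?thesis by blast
  next
    case False
    obtain e1 e2 where e: "e1 \<in> M" "e2 \<in> M" "e1 \<noteq> e2" using two_elems[OF finM] c3 by auto
    have "mset n E M e1 e2"
    proof
      fix r f assume rf: "r \<in> M - {e1, e2}" "f \<in> M" "f \<noteq> r"
      show "is_gap E r f"
        by (rule gapI) (use rf False in auto)
    qed (use sg mat e in auto)
    then show ?thesis by blast
  qed
qed

theorem corollary4p11:
  fixes n :: nat and E :: "nat set set"
  assumes "simple_graph n E"
    and "matching_number E \<ge> 2"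
  shows "reg TYPE('k::field) n (sq_power2_gens E) \<ge> ereal (real (aim E 2) + 2)"
proof -
  have finE: "finite E" using finite_E[OF assms(1)] .
  have "{card M | M. is_matching E M} \<subseteq> card ` Pow E" unfolding is_matching_def by blast
  then have "finite {card M | M. is_matching E M}" by (rule finite_subset) (simp add: finE)
  moreover have "{card M | M. is_matching E M} \<noteq> {}"
    by (auto simp: is_matching_def intro!: exI[of _ "{}"])
  ultimately have "matching_number E \<in> {card M | M. is_matching E M}"
    unfolding matching_number_def by (rule Max_in)
  then obtain M0 where M0: "is_matching E M0" "card M0 \<ge> 2" using assms(2) by auto
  have finM0: "finite M0" using M0(1) finE by (auto simp: is_matching_def intro: finite_subset)
  obtain e1 e2 where e: "e1 \<in> M0" "e2 \<in> M0" "e1 \<noteq> e2" using two_elems[OF finM0 M0(2)] by blast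
  have ms2: "mset n E {e1, e2} e1 e2"
  proof
    show "is_matching E {e1, e2}" using M0(1) e unfolding is_matching_def by auto
  qed (use assms(1) e in auto)
  have r4: "ereal (real 2 + 2) \<le> reg TYPE('k) n (sq_power2_gens E)"
    using mset.main[OF ms2] e(3) by (simp add: mset.m_def[OF ms2])
  show ?thesis
  proof (cases "aim E 2 \<le> 2")
    case True
    then have "ereal (real (aim E 2) + 2) \<le> ereal (real 2 + 2)" by simp
    then show ?thesis using r4 by (meson order_trans)
  next
    case False
    have "{card M | M. admissible_matching E 2 M} \<subseteq> card ` Pow E"
      unfolding admissible_matching_def is_matching_def by blast
    then have "finite {card M | M. admissible_matching E 2 M}" by (rule finite_subset) (simp add: finE)
    then have "finite ({card M | M. admissible_matching E 2 M} \<union> {0})" by simp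
    then have "aim E 2 \<in> {card M | M. admissible_matching E 2 M} \<union> {0}"
      unfolding aim_def by (intro Max_in) auto
    then obtain M where M: "admissible_matching E 2 M" "card M = aim E 2" using False by auto
    then obtain f1 f2 where ms: "mset n E M f1 f2" using extract_pair[OF assms(1) M(1)] False by auto
    show ?thesis using mset.main[OF ms] M(2) by (simp add: mset.m_def[OF ms])
  qed
qed

end
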